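(* In the model and protocol $\mathrm{OciorABA}^*$ described in the context, with $n\ge 3t+1$ and every honest node receiving an input message, if any honest node outputs a value $w$, then every honest node eventually outputs $w$.
   Context: Model: there are $n$ nodes $\mathrm{Node}_1,\dots,\mathrm{Node}_n$ in an asynchronous network (every message sent between honest nodes is eventually delivered, with arbitrary adversarial delay). An adaptive adversary may corrupt (make dishonest/Byzantine) at most $t$ nodes in total; $\mathcal F\subseteq[1:n]$ denotes the set of dishonest nodes; $n\ge 3t+1$. Primitives used as black boxes: (RBC) For each $j\in[1:n]$ there is a reliable broadcast instance $\mathrm{RBC}_j$ with leader $\mathrm{Node}_j$, satisfying: Consistency (if two honest nodes output $w',w''$ then $w'=w''$); Validity (if the leader is honest and inputs $w$, every honest node eventually outputs $w$); Totality (if one honest node outputs a value, every honest node eventually outputs a value). (ABBA) For each $j\in[1:n]$ there is a binary Byzantine agreement instance $\mathrm{ABBA}_j$ (inputs and outputs in $\{0,1\}$), satisfying: Termination (if all honest nodes provide inputs, every honest node eventually outputs a value and terminates); Consistency (if an honest node outputs $b$, every honest node eventually outputs $b$); Validity (if all honest nodes input the same $b$, every honest node eventually outputs $b$). (Erasure code) An $(n,t+1)$ erasure code over an alphabet $\Sigma$: an encoder $\mathrm{Enc}$ mapping a message $w$ to $(\mathrm{Enc}_1(w),\dots,\mathrm{Enc}_n(w))\in\Sigma^n$ and a decoder $\mathrm{Dec}$ such that for every set $K\subseteq[1:n]$ with $|K|=t+1$, $\mathrm{Dec}(\{\mathrm{Enc}_j(w)\}_{j\in K})=w$. Protocol $\mathrm{OciorABA}^*$,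 code for an honest $\mathrm{Node}_i$ with input message $w_i$: (1) Compute $(y^{(i)}_1,\dots,y^{(i)}_n)=\mathrm{Enc}(w_i)$ and input $y^{(i)}_i$ into $\mathrm{RBC}_i$ (as leader). (2) Upon delivery of a value $y^{(j)}_j$ from $\mathrm{RBC}_j$ (after step (1) has been executed), if $\mathrm{Node}_i$ has not yet given an input to $\mathrm{ABBA}_j$: set $a_i[j]=1$ if $y^{(j)}_j=y^{(i)}_j$ and $a_i[j]=0$ otherwise, and input $a_i[j]$ into $\mathrm{ABBA}_j$. (3) Upon obtaining outputs from $n-t$ of the instances $\mathrm{ABBA}_1,\dots,\mathrm{ABBA}_n$, input $0$ into every $\mathrm{ABBA}_j$ to which $\mathrm{Node}_i$ has not yet given an input. (4) Upon obtaining outputs from all $n$ ABBA instances: let $S=\{j:\mathrm{ABBA}_j\text{ output }1\}$. If $|S|<t+1$, output a default value $\bot$ and terminate. Otherwise let $K$ be the set of the $t+1$ smallest elements of $S$, wait for delivery of $y^{(j)}_j$ from $\mathrm{RBC}_j$ for all $j\in K$, output $\mathrm{Dec}(\{y^{(j)}_j\}_{j\in K})$ and terminate. *)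

theory Defs
  imports Main
begin

text \<open>
Views of an execution (per honest node i, instance j, time tau):
  deliv i j tau : value delivered to node i by RBC_j up to time tau (None = nothing yet)
  ain   i j tau : input given by node i to ABBA_j up to time tau
  aout  i j tau : output of ABBA_j at node i up to time tau
  outp  i tau   : output of node i up to time tau; Some None is the default value bot,
                  Some (Some w) is the message w.
F is the set of (ever) dishonest nodes; winput i is the input of node i.
\<close>

definition stable :: "(nat \<Rightarrow> 'a option) \<Rightarrow> bool" where
  "stable f \<longleftrightarrow> (\<forall>\<tau> \<tau>' v. f \<tau> = Some v \<and> \<tau> \<le> \<tau>' \<longrightarrow> f \<tau>' = Some v)"

definition smallest :: "nat \<Rightarrow> nat set \<Rightarrow> nat set" where
  "smallest k S = {j \<in> S. card {l \<in> S. l < j} < k}"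

definition erasure_code ::
  "nat \<Rightarrow> nat \<Rightarrow> ('m \<Rightarrow> nat \<Rightarrow> 'c) \<Rightarrow> ((nat \<Rightarrow> 'c option) \<Rightarrow> 'm) \<Rightarrow> bool" where
  "erasure_code n t Enc Dec \<longleftrightarrow>
     (\<forall>w K. K \<subseteq> {1..n} \<and> card K = t + 1 \<longrightarrow>
        Dec (\<lambda>j. if j \<in> K then Some (Enc w j) else None) = w)"

definition honest :: "nat \<Rightarrow> nat set \<Rightarrow> nat set" where
  "honest n F = {1..n} - F"

text \<open>RBC guarantees (leader j honest inputs Enc_j(w_j) in step (1)).\<close>
definition rbc_props ::
  "nat \<Rightarrow> nat set \<Rightarrow> ('m \<Rightarrow> nat \<Rightarrow> 'c) \<Rightarrow> (nat \<Rightarrow> 'm)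
   \<Rightarrow> (nat \<Rightarrow> nat \<Rightarrow> nat \<Rightarrow> 'c option) \<Rightarrow> bool" where
  "rbc_props n F Enc winput deliv \<longleftrightarrow>
     (\<forall>j \<in> {1..n}.
        (\<forall>i \<in> honest n F. \<forall>i' \<in> honest n F. \<forall>\<tau> \<tau>' v v'.
            deliv i j \<tau> = Some v \<and> deliv i' j \<tau>' = Some v' \<longrightarrow> v = v')
      \<and> (j \<in> honest n F \<longrightarrow>
            (\<forall>i \<in> honest n F. \<exists>\<tau>. deliv i j \<tau> = Some (Enc (winput j) j)))
      \<and> ((\<exists>i \<in> honest n F. \<exists>\<tau>. deliv i j \<tau> \<noteq> None) \<longrightarrow>
            (\<forall>i \<in> honest n F. \<exists>\<tau>. deliv i j \<tau> \<noteq> None)))"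

definition abba_props ::
  "nat \<Rightarrow> nat set \<Rightarrow> (nat \<Rightarrow> nat \<Rightarrow> nat \<Rightarrow> bool option)
   \<Rightarrow> (nat \<Rightarrow> nat \<Rightarrow> nat \<Rightarrow> bool option) \<Rightarrow> bool" where
  "abba_props n F ain aout \<longleftrightarrow>
     (\<forall>j \<in> {1..n}.
        ((\<forall>i \<in> honest n F. \<exists>\<tau>. ain i j \<tau> \<noteq> None) \<longrightarrow>
            (\<forall>i \<in> honest n F. \<exists>\<tau>. aout i j \<tau> \<noteq> None))
      \<and> (\<forall>i \<in> honest n F. \<forall>\<tau> b. aout i j \<tau> = Some b \<longrightarrow>
            (\<forall>i' \<in> honest n F. \<exists>\<tau>'. aout i' j \<tau>' = Some b))
      \<and> (\<forall>b. (\<forall>i \<in> honest n F. \<exists>\<tau>. ain i j \<tau> = Some b) \<longrightarrow>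
            (\<forall>i \<in> honest n F. \<exists>\<tau>. aout i j \<tau> = Some b)))"

definition nouts :: "nat \<Rightarrow> (nat \<Rightarrow> nat \<Rightarrow> nat \<Rightarrow> bool option) \<Rightarrow> nat \<Rightarrow> nat \<Rightarrow> nat" where
  "nouts n aout i \<tau> = card {k \<in> {1..n}. aout i k \<tau> \<noteq> None}"

text \<open>Step (4): the value node i outputs, given its view at time tau
  (meaningful when all ABBA outputs and the needed RBC deliveries are present).\<close>
definition out_value ::
  "nat \<Rightarrow> nat \<Rightarrow> ((nat \<Rightarrow> 'c option) \<Rightarrow> 'm)
   \<Rightarrow> (nat \<Rightarrow> nat \<Rightarrow> nat \<Rightarrow> 'c option) \<Rightarrow> (nat \<Rightarrow> nat \<Rightarrow> nat \<Rightarrow> bool option)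
   \<Rightarrow> nat \<Rightarrow> nat \<Rightarrow> 'm option" where
  "out_value n t Dec deliv aout i \<tau> =
     (let S = {j \<in> {1..n}. aout i j \<tau> = Some True} in
      if card S < t + 1 then None
      else Some (Dec (\<lambda>j. if j \<in> smallest (t + 1) S then deliv i j \<tau> else None)))"

text \<open>Steps (1)-(4) executed by every honest node (local computation is instantaneous).\<close>
definition protocol_rules ::
  "nat \<Rightarrow> nat \<Rightarrow> nat set \<Rightarrow> ('m \<Rightarrow> nat \<Rightarrow> 'c) \<Rightarrow> ((nat \<Rightarrow> 'c option) \<Rightarrow> 'm)
   \<Rightarrow> (nat \<Rightarrow> 'm) \<Rightarrow> (nat \<Rightarrow> nat \<Rightarrow> nat \<Rightarrow> 'c option)
   \<Rightarrow> (nat \<Rightarrow> nat \<Rightarrow> nat \<Rightarrow> bool option) \<Rightarrow> (nat \<Rightarrow> nat \<Rightarrow> nat \<Rightarrow> bool option)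
   \<Rightarrow> (nat \<Rightarrow> nat \<Rightarrow> 'm option option) \<Rightarrow> bool" where
  "protocol_rules n t F Enc Dec winput deliv ain aout outp \<longleftrightarrow>
     (\<forall>i \<in> honest n F.
        stable (outp i)
      \<and> (\<forall>j \<in> {1..n}. stable (deliv i j) \<and> stable (ain i j) \<and> stable (aout i j))
      \<comment> \<open>step (2), justification of an input (or step (3))\<close>
      \<and> (\<forall>j \<in> {1..n}. \<forall>\<tau> b. ain i j \<tau> = Some b \<longrightarrow>
            ((\<exists>v. deliv i j \<tau> = Some v \<and> b = (v = Enc (winput i) j))
             \<or> (b = False \<and> nouts n aout i \<tau> \<ge> n - t)))
      \<comment> \<open>step (2), trigger upon delivery\<close>
      \<and> (\<forall>j \<in> {1..n}. \<forall>\<tau>. deliv i j \<tau> \<noteq> None \<longrightarrow> ain i j \<tau> \<noteq> None)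
      \<comment> \<open>step (3), trigger upon n-t ABBA outputs\<close>
      \<and> (\<forall>\<tau>. nouts n aout i \<tau> \<ge> n - t \<longrightarrow> (\<forall>j \<in> {1..n}. ain i j \<tau> \<noteq> None))
      \<comment> \<open>step (4), safety of the output\<close>
      \<and> (\<forall>\<tau> ov. outp i \<tau> = Some ov \<longrightarrow>
            (\<forall>j \<in> {1..n}. aout i j \<tau> \<noteq> None)
          \<and> (let S = {j \<in> {1..n}. aout i j \<tau> = Some True} in
               card S \<ge> t + 1 \<longrightarrow> (\<forall>j \<in> smallest (t + 1) S. deliv i j \<tau> \<noteq> None))
          \<and> ov = out_value n t Dec deliv aout i \<tau>)
      \<comment> \<open>step (4), output as soon as its conditions hold\<close>
      \<and> (\<forall>\<tau>. (\<forall>j \<in> {1..n}. aout i j \<tau> \<noteq> None)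
             \<and> (let S = {j \<in> {1..n}. aout i j \<tau> = Some True} in
                  card S \<ge> t + 1 \<longrightarrow> (\<forall>j \<in> smallest (t + 1) S. deliv i j \<tau> \<noteq> None))
             \<longrightarrow> outp i \<tau> \<noteq> None))"

definition ociorABA_exec ::
  "nat \<Rightarrow> nat \<Rightarrow> nat set \<Rightarrow> ('m \<Rightarrow> nat \<Rightarrow> 'c) \<Rightarrow> ((nat \<Rightarrow> 'c option) \<Rightarrow> 'm)
   \<Rightarrow> (nat \<Rightarrow> 'm) \<Rightarrow> (nat \<Rightarrow> nat \<Rightarrow> nat \<Rightarrow> 'c option)
   \<Rightarrow> (nat \<Rightarrow> nat \<Rightarrow> nat \<Rightarrow> bool option) \<Rightarrow> (nat \<Rightarrow> nat \<Rightarrow> nat \<Rightarrow> bool option)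
   \<Rightarrow> (nat \<Rightarrow> nat \<Rightarrow> 'm option option) \<Rightarrow> bool" where
  "ociorABA_exec n t F Enc Dec winput deliv ain aout outp \<longleftrightarrow>
     rbc_props n F Enc winput deliv
   \<and> abba_props n F ain aout
   \<and> protocol_rules n t F Enc Dec winput deliv ain aout outp"

end

theory Submission
  imports Defs
begin

lemma finite_common_time:
  assumes "finite A" "\<forall>j\<in>A. \<exists>\<tau>::nat. \<forall>\<tau>'\<ge>\<tau>. P j \<tau>'"
  shows "\<exists>T. \<forall>j\<in>A. \<forall>\<tau>'\<ge>T. P j \<tau>'"
  using assms
proof (induction A rule: finite_induct)
  case empty then show ?case by auto
next
  case (insert x A)
  then obtain T where T: "\<forall>j\<in>A. \<forall>\<tau>'\<ge>T. P j \<tau>'" by auto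
  from insert obtain T2 where T2: "\<forall>\<tau>'\<ge>T2. P x \<tau>'" by auto
  show ?case
  proof (intro exI[of _ "max T T2"] ballI allI impI)
    fix j \<tau>' assume j: "j \<in> insert x A" and le: "max T T2 \<le> \<tau>'"
    have "T \<le> \<tau>'" "T2 \<le> \<tau>'" using le by auto
    then show "P j \<tau>'" using T T2 j by blast
  qed
qed

lemma stable_later: "stable f \<Longrightarrow> f \<tau> = Some v \<Longrightarrow> \<tau> \<le> \<tau>' \<Longrightarrow> f \<tau>' = Some v"
  unfolding stable_def by blast

theorem theorem3:
  fixes n t :: nat and F :: "nat set"
    and Enc :: "'m \<Rightarrow> nat \<Rightarrow> 'c" and Dec :: "(nat \<Rightarrow> 'c option) \<Rightarrow> 'm"
    and winput :: "nat \<Rightarrow> 'm"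
    and deliv :: "nat \<Rightarrow> nat \<Rightarrow> nat \<Rightarrow> 'c option"
    and ain aout :: "nat \<Rightarrow> nat \<Rightarrow> nat \<Rightarrow> bool option"
    and outp :: "nat \<Rightarrow> nat \<Rightarrow> 'm option option"
  assumes "n \<ge> 3 * t + 1"
    and "F \<subseteq> {1..n}" and "card F \<le> t"
    and "erasure_code n t Enc Dec"
    and "ociorABA_exec n t F Enc Dec winput deliv ain aout outp"
    and "i \<in> honest n F" and "outp i \<tau> = Some w"
  shows "\<forall>i' \<in> honest n F. \<exists>\<tau>'. outp i' \<tau>' = Some w"
proof
  fix i' assume i': "i' \<in> honest n F"
  have R: "rbc_props n F Enc winput deliv" and A: "abba_props n F ain aout"
    and P: "protocol_rules n t F Enc Dec winput deliv ain aout outp"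
    using assms(5) unfolding ociorABA_exec_def by auto
  have Pi: "\<forall>j\<in>{1..n}. aout i j \<tau> \<noteq> None"
    "let S = {j \<in> {1..n}. aout i j \<tau> = Some True} in
               card S \<ge> t + 1 \<longrightarrow> (\<forall>j \<in> smallest (t + 1) S. deliv i j \<tau> \<noteq> None)"
    "w = out_value n t Dec deliv aout i \<tau>"
    using P assms(6,7) unfolding protocol_rules_def by blast+
  have stab: "\<And>j. j \<in> {1..n} \<Longrightarrow> stable (deliv i' j) \<and> stable (aout i' j)"
    using P i' unfolding protocol_rules_def by blast
  define Q where "Q j \<tau>' \<longleftrightarrow> aout i' j \<tau>' = aout i j \<tau> \<and>
      (deliv i j \<tau> \<noteq> None \<longrightarrow> deliv i' j \<tau>' = deliv i j \<tau>)" for j \<tau>'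
  have "\<forall>j\<in>{1..n}. \<exists>T. \<forall>\<tau>'\<ge>T. Q j \<tau>'"
  proof
    fix j assume j: "j \<in> {1..n}"
    obtain b where b: "aout i j \<tau> = Some b" using Pi(1) j by blast
    obtain T1 where T1: "aout i' j T1 = Some b"
      using A j b assms(6) i' unfolding abba_props_def by blast
    have "\<exists>T2. deliv i j \<tau> \<noteq> None \<longrightarrow> deliv i' j T2 = deliv i j \<tau>"
    proof (cases "deliv i j \<tau>")
      case None then show ?thesis by auto
    next
      case (Some v)
      then obtain T2 v' where T2: "deliv i' j T2 = Some v'"
        using R j assms(6) i' unfolding rbc_props_def by (metis option.exhaust)
      have "v = v'" using R j assms(6) i' Some T2 unfolding rbc_props_def by blast
      then show ?thesis using Some T2 by auto
    qed
    then obtain T2 where T2: "deliv i j \<tau> \<noteq> None \<longrightarrow> deliv i' j T2 = deliv i j \<tau>" by blast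
    show "\<exists>T. \<forall>\<tau>'\<ge>T. Q j \<tau>'"
    proof (intro exI allI impI)
      fix \<tau>' assume "max T1 T2 \<le> \<tau>'"
      then show "Q j \<tau>'" unfolding Q_def
        using stable_later[of "aout i' j" T1 b \<tau>'] T1 T2 b stab[OF j]
          stable_later[of "deliv i' j" T2 _ \<tau>'] by auto
    qed
  qed
  then obtain T where T: "\<forall>j\<in>{1..n}. Q j T"
    using finite_common_time[of "{1..n}" Q] by (meson finite_atLeastAtMost order_refl)
  have Seq: "{j \<in> {1..n}. aout i' j T = Some True} = {j \<in> {1..n}. aout i j \<tau> = Some True}"
    using T unfolding Q_def by auto
  define S where "S = {j \<in> {1..n}. aout i j \<tau> = Some True}"
  have smS: "smallest (t+1) S \<subseteq> S" unfolding smallest_def by auto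
  have Sn: "S \<subseteq> {1..n}" unfolding S_def by auto
  have Pi2: "card S \<ge> t + 1 \<Longrightarrow> j \<in> smallest (t + 1) S \<Longrightarrow> deliv i j \<tau> \<noteq> None" for j
    using Pi(2) unfolding Let_def S_def by blast
  have dsame: "card S \<ge> t + 1 \<Longrightarrow> j \<in> smallest (t + 1) S \<Longrightarrow> deliv i' j T = deliv i j \<tau>" for j
  proof -
    assume c: "card S \<ge> t + 1" and j: "j \<in> smallest (t + 1) S"
    have "j \<in> {1..n}" using j smS Sn by blast
    then have "Q j T" using T by blast
    then show ?thesis using Pi2[OF c j] unfolding Q_def by blast
  qed
  have trig: "(\<forall>j \<in> {1..n}. aout i' j T \<noteq> None)
             \<and> (let S = {j \<in> {1..n}. aout i' j T = Some True} in
                  card S \<ge> t + 1 \<longrightarrow> (\<forall>j \<in> smallest (t + 1) S. deliv i' j T \<noteq> None))"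
  proof
    show "\<forall>j \<in> {1..n}. aout i' j T \<noteq> None"
    proof
      fix j assume j: "j \<in> {1..n}"
      then have "Q j T" using T by blast
      then show "aout i' j T \<noteq> None" using Pi(1) j unfolding Q_def by simp
    qed
    show "let S = {j \<in> {1..n}. aout i' j T = Some True} in
                  card S \<ge> t + 1 \<longrightarrow> (\<forall>j \<in> smallest (t + 1) S. deliv i' j T \<noteq> None)"
      unfolding Seq Let_def S_def[symmetric] using dsame Pi2 by simp
  qed
  then obtain ov where ov: "outp i' T = Some ov"
    using P i' unfolding protocol_rules_def by blast
  then have ov2: "ov = out_value n t Dec deliv aout i' T"
    using P i' unfolding protocol_rules_def by blast
  have "out_value n t Dec deliv aout i' T = out_value n t Dec deliv aout i \<tau>"
  proof -
    have "card S \<ge> t + 1 \<Longrightarrow> (\<lambda>j. if j \<in> smallest (t + 1) S then deliv i' j T else None)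
        = (\<lambda>j. if j \<in> smallest (t + 1) S then deliv i j \<tau> else None)"
      using dsame by auto
    then show ?thesis unfolding out_value_def Let_def Seq S_def[symmetric] by simp
  qed
  then show "\<exists>\<tau>'. outp i' \<tau>' = Some w" using ov ov2 Pi(3) by auto
qed

end
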